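(* Let $n\ge 3$ and let $M\in\mathbb{R}^{n\times n}$ be a nonnegative irreducible matrix. Then (i) $\lim_{\ell\to\infty}\mathcal{E}^\ell(M)=\mathcal{E}(M)$ (entrywise); and (ii) the sequence $(\mathcal{E}^\ell(M))_{\ell\ge 1}$ is entrywise nondecreasing: $\mathcal{E}^\ell(M)\le\mathcal{E}^{\ell+1}(M)$ entrywise for every $\ell\ge 1$.
   Context: Let $N=\{1,\dots,n\}$ and let $G$ be the directed graph on $N$ with an edge $i\to j$ iff $m_{ij}>0$ (strongly connected since $M$ is irreducible); $\delta_{ij}$ is the directed graph distance from $i$ to $j$ in $G$ ($\delta_{ii}=0$). For $M_{RC}$ the submatrix with rows in $R$ and columns in $C$, $\bar S=N\setminus S$, and $\rho(M)$ the spectral radius, the isoradial reduction is $\mathcal{I}_S(M)=M_{SS}-M_{S\bar S}(M_{\bar S\bar S}-\rho(M)I)^{-1}M_{\bar S S}$ (rows/columns indexed by $S$), and the effective transition matrix is $\mathcal{E}(M)=[\varepsilon_{ij}]$ with $\varepsilon_{ij}=\mathcal{I}_{\{i,j\}}(M)_{ij}$ for $i\ne j$ and $\varepsilon_{ii}=\sum_{k\ne i}\mathcal{I}_{\{i,k\}}(M)_{ii}$. For $i\neq j$ and integer $\ell\ge1$ let $\Gamma^\ell_{ij}=\{k\in N:\delta_{ik}+\delta_{kj}\le\ell\text{ and }\delta_{jk}+\delta_{ki}\le\ell\}\cup\{i,j\}$, let $S=\{i,j\}$ and $\tilde S=\Gamma^\ell_{ij}\setminus S$. The $\ell$-step approximation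 is $$\mathcal{I}^\ell_S(M)=M_{SS}+\rho(M)^{-1}M_{S\tilde S}\Big(\sum_{k=0}^{\ell}\big(\rho(M)^{-1}M_{\tilde S\tilde S}\big)^k\Big)M_{\tilde S S}$$ (the second term being zero if $\tilde S=\emptyset$), with rows/columns indexed by $S$, and $\mathcal{E}^\ell(M)=[\varepsilon^\ell_{ij}]$ where $\varepsilon^\ell_{ij}=\mathcal{I}^\ell_{\{i,j\}}(M)_{ij}$ for $i\ne j$ and $\varepsilon^\ell_{ii}=\sum_{k\ne i}\mathcal{I}^\ell_{\{i,k\}}(M)_{ii}$. *)

theory Defs
  imports "Jordan_Normal_Form.Spectral_Radius" "Jordan_Normal_Form.DL_Submatrix"
begin

(* Indices are 0-based: N = {0..<n}. Matrices are JNF matrices  real mat  of dimension n x n. *)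

definition nonneg_mat :: "real mat \<Rightarrow> bool" where
  "nonneg_mat M \<longleftrightarrow> (\<forall>i<dim_row M. \<forall>j<dim_col M. M $$ (i,j) \<ge> 0)"

(* classical irreducibility (no permutation to block upper-triangular form), written index-wise:
   there is no nonempty proper index set I with M(i,j) = 0 for all i in I, j not in I *)
definition irreducible_mat :: "real mat \<Rightarrow> bool" where
  "irreducible_mat M \<longleftrightarrow> square_mat M \<and>
     \<not> (\<exists>I. I \<noteq> {} \<and> I \<subset> {0..<dim_row M} \<and>
           (\<forall>i\<in>I. \<forall>j\<in>{0..<dim_row M} - I. M $$ (i,j) = 0))"

definition rho :: "real mat \<Rightarrow> real" where
  "rho M = spectral_radius (map_mat complex_of_real M)"

definition mat_inv :: "real mat \<Rightarrow> real mat" where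
  "mat_inv A = (THE B. inverts_mat A B \<and> inverts_mat B A)"

definition edges :: "real mat \<Rightarrow> (nat \<times> nat) set" where
  "edges M = {(i,j). i < dim_row M \<and> j < dim_row M \<and> M $$ (i,j) > 0}"

definition dist_G :: "real mat \<Rightarrow> nat \<Rightarrow> nat \<Rightarrow> nat" where
  "dist_G M i j = (LEAST k. (i,j) \<in> (edges M) ^^ k)"

(* position of index i inside the ordered index set S (rows/columns of M_{RC} are indexed by
   R and C in increasing order, as in JNF's submatrix) *)
definition pos :: "nat set \<Rightarrow> nat \<Rightarrow> nat" where
  "pos S i = card {a\<in>S. a < i}"

definition entry :: "real mat \<Rightarrow> nat set \<Rightarrow> nat \<Rightarrow> nat \<Rightarrow> real" where
  "entry A S i j = A $$ (pos S i, pos S j)"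

definition isoradial :: "nat set \<Rightarrow> real mat \<Rightarrow> real mat" where
  "isoradial S M = (let n = dim_row M; Sb = {0..<n} - S in
     submatrix M S S - submatrix M S Sb *
       mat_inv (submatrix M Sb Sb - rho M \<cdot>\<^sub>m 1\<^sub>m (card Sb)) * submatrix M Sb S)"

definition eff :: "real mat \<Rightarrow> real mat" where
  "eff M = mat (dim_row M) (dim_row M) (\<lambda>(i,j).
     if i \<noteq> j then entry (isoradial {i,j} M) {i,j} i j
     else (\<Sum>k\<in>{0..<dim_row M} - {i}. entry (isoradial {i,k} M) {i,k} i i))"

fun geom_mat :: "real mat \<Rightarrow> nat \<Rightarrow> real mat" where
  "geom_mat A 0 = 1\<^sub>m (dim_row A)"
| "geom_mat A (Suc k) = geom_mat A k + A ^\<^sub>m (Suc k)"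

definition Gamma :: "real mat \<Rightarrow> nat \<Rightarrow> nat \<Rightarrow> nat \<Rightarrow> nat set" where
  "Gamma M l i j = {k. k < dim_row M \<and> dist_G M i k + dist_G M k j \<le> l
                        \<and> dist_G M j k + dist_G M k i \<le> l} \<union> {i,j}"

definition isoradial_l :: "nat \<Rightarrow> nat \<Rightarrow> nat \<Rightarrow> real mat \<Rightarrow> real mat" where
  "isoradial_l l i j M = (let S = {i,j}; St = Gamma M l i j - S in
     submatrix M S S + (1 / rho M) \<cdot>\<^sub>m (submatrix M S St *
       geom_mat ((1 / rho M) \<cdot>\<^sub>m submatrix M St St) l * submatrix M St S))"

definition eff_l :: "nat \<Rightarrow> real mat \<Rightarrow> real mat" where
  "eff_l l M = mat (dim_row M) (dim_row M) (\<lambda>(i,j).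
     if i \<noteq> j then entry (isoradial_l l i j M) {i,j} i j
     else (\<Sum>k\<in>{0..<dim_row M} - {i}. entry (isoradial_l l i k M) {i,k} i i))"

end

theory Submission
  imports Defs
begin


lemma mult_entry:
  assumes "(A::real mat) \<in> carrier_mat n k" "B \<in> carrier_mat k m" "i < n" "j < m"
  shows "(A*B) $$ (i,j) = (\<Sum>t<k. A$$(i,t) * B$$(t,j))"
  using assms by (auto simp: scalar_prod_def atLeast0LessThan intro!: sum.cong)

lemma mult_vec_entry:
  assumes "(A::'a::comm_semiring_0 mat) \<in> carrier_mat n k" "v \<in> carrier_vec k" "i < n"
  shows "(A *\<^sub>v v) $ i = (\<Sum>t<k. A$$(i,t) * v$t)"
  using assms by (auto simp: scalar_prod_def atLeast0LessThan intro!: sum.cong)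

lemma row_col:
  assumes "(A::'a::comm_semiring_0 mat) \<in> carrier_mat n k" "B \<in> carrier_mat k m" "i < n" "j < m"
  shows "row A i \<bullet> col B j = (\<Sum>t<k. A$$(i,t) * B$$(t,j))"
  using assms by (auto simp: scalar_prod_def atLeast0LessThan intro!: sum.cong)

definition mv :: "real mat \<Rightarrow> (nat \<Rightarrow> real) \<Rightarrow> nat \<Rightarrow> real" where
  "mv A x p = (\<Sum>q<dim_col A. A $$ (p,q) * x q)"

lemma mv_mult:
  assumes A: "A \<in> carrier_mat n n" and B: "B \<in> carrier_mat n n" and p: "p < n"
  shows "mv (A*B) x p = mv A (mv B x) p"
proof -
  have "mv (A*B) x p = (\<Sum>q<n. (\<Sum>t<n. A$$(p,t) * B$$(t,q)) * x q)"
    unfolding mv_def using A B p by (auto simp: row_col[OF A B] intro!: sum.cong)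
  also have "\<dots> = (\<Sum>q<n. \<Sum>t<n. A$$(p,t) * (B$$(t,q) * x q))"
    by (simp add: sum_distrib_right mult.assoc)
  also have "\<dots> = (\<Sum>t<n. \<Sum>q<n. A$$(p,t) * (B$$(t,q) * x q))"
    by (rule sum.swap)
  also have "\<dots> = mv A (mv B x) p"
    unfolding mv_def using A B by (simp add: sum_distrib_left)
  finally show ?thesis .
qed

lemma mv_one: assumes "p < n" shows "mv (1\<^sub>m n) x p = x p"
proof -
  have "mv (1\<^sub>m n) x p = (\<Sum>q<n. if p = q then x q else 0)"
    unfolding mv_def using assms by (intro sum.cong) auto
  also have "\<dots> = x p" using assms by simp
  finally show ?thesis .
qed

lemma mv_cong: "(\<And>q. q < dim_col A \<Longrightarrow> x q = y q) \<Longrightarrow> mv A x p = mv A y p"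
  unfolding mv_def by (auto intro!: sum.cong)

lemma mv_add: "mv A (\<lambda>q. x q + y q) p = mv A x p + mv A y p"
  unfolding mv_def by (simp add: distrib_left sum.distrib)

lemma mv_diff: "mv A (\<lambda>q. x q - r * y q) p = mv A x p - r * mv A y p"
  unfolding mv_def by (simp add: right_diff_distrib sum_subtractf sum_distrib_left algebra_simps)

lemma mv_scale: "mv A (\<lambda>q. r * y q) p = r * mv A y p"
  unfolding mv_def by (simp add: sum_distrib_left algebra_simps)

lemma mv_nonneg:
  assumes "A \<in> carrier_mat n n" "nonneg_mat A" "\<forall>q<n. y q \<ge> 0" "p < n"
  shows "mv A y p \<ge> 0"
  using assms unfolding mv_def nonneg_mat_def by (auto intro!: sum_nonneg)

lemma mv_mono:
  assumes "A \<in> carrier_mat n n" "nonneg_mat A" "\<forall>q<n. y q \<le> z q" "p < n"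
  shows "mv A y p \<le> mv A z p"
  using assms unfolding mv_def nonneg_mat_def by (auto intro!: sum_mono mult_left_mono)

lemma nonneg_mult:
  assumes "A \<in> carrier_mat n n" "B \<in> carrier_mat n n" "nonneg_mat A" "nonneg_mat B"
  shows "nonneg_mat (A*B)"
  using assms unfolding nonneg_mat_def by (auto simp: row_col[OF assms(1,2)] intro!: sum_nonneg)

lemma nonneg_pow:
  assumes "A \<in> carrier_mat n n" "nonneg_mat A"
  shows "nonneg_mat (A ^\<^sub>m k)"
proof (induction k)
  case 0 then show ?case unfolding nonneg_mat_def by auto
next
  case (Suc k) then show ?case using nonneg_mult[OF pow_carrier_mat[OF assms(1)] assms(1) _ assms(2)] by simp
qed

lemma pow_smult:
  assumes A: "(A::real mat) \<in> carrier_mat n n"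
  shows "(a \<cdot>\<^sub>m A) ^\<^sub>m k = a^k \<cdot>\<^sub>m A ^\<^sub>m k"
proof (induction k)
  case 0 then show ?case using A by auto
next
  case (Suc k)
  have C1: "a^k \<cdot>\<^sub>m A ^\<^sub>m k \<in> carrier_mat n n" "a \<cdot>\<^sub>m A \<in> carrier_mat n n" using A by auto
  show ?case
    unfolding pow_mat.simps Suc
    by (rule eq_matI, insert A, auto simp: mult_entry[OF C1] mult_entry[OF pow_carrier_mat[OF A] A]
       sum_distrib_left intro!: sum.cong)
qed

lemma sr_nonneg: assumes "A \<in> carrier_mat n n" "n > 0" shows "spectral_radius A \<ge> 0"
  using spectral_radius_mem_max(1)[OF assms] by auto

lemma sr_scaled_le:
  assumes M: "M \<in> carrier_mat n n" and n: "n > 0" and a: "a > 0"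
  shows "spectral_radius (map_mat complex_of_real (a \<cdot>\<^sub>m M)) \<le> a * rho M"
proof -
  let ?A = "map_mat complex_of_real (a \<cdot>\<^sub>m M)"
  let ?B = "map_mat complex_of_real M"
  have A: "?A \<in> carrier_mat n n" and B: "?B \<in> carrier_mat n n" using M by auto
  from spectral_radius_mem_max(1)[OF A n] obtain mu where mu: "mu \<in> spectrum ?A"
    and eq: "spectral_radius ?A = cmod mu" by auto
  from mu obtain v where ev: "eigenvector ?A v mu" unfolding spectrum_def eigenvalue_def by auto
  hence v: "v \<in> carrier_vec n" "v \<noteq> 0\<^sub>v n" and Av: "?A *\<^sub>v v = mu \<cdot>\<^sub>v v"
    unfolding eigenvector_def using A by auto
  have "?B *\<^sub>v v = (mu / complex_of_real a) \<cdot>\<^sub>v v"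
  proof (rule eq_vecI)
    fix i assume i: "i < dim_vec ((mu / complex_of_real a) \<cdot>\<^sub>v v)"
    hence i: "i < n" using v by auto
    have "(?A *\<^sub>v v) $ i = mu * v $ i" using Av i v by auto
    moreover have "(?A *\<^sub>v v) $ i = complex_of_real a * (?B *\<^sub>v v) $ i"
      using i v M by (auto simp: mult_vec_entry[OF A v(1) i] mult_vec_entry[OF B v(1) i] sum_distrib_left
        intro!: sum.cong)
    ultimately show "(?B *\<^sub>v v) $ i = ((mu / complex_of_real a) \<cdot>\<^sub>v v) $ i"
      using a i v by (auto simp: field_simps)
  qed (use v M in auto)
  hence "eigenvector ?B v (mu / complex_of_real a)" unfolding eigenvector_def using v M by auto
  hence "cmod (mu / complex_of_real a) \<in> cmod ` spectrum ?B"
    unfolding spectrum_def eigenvalue_def by auto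
  from spectral_radius_mem_max(2)[OF B n this]
  have "cmod mu / a \<le> rho M" unfolding rho_def using a by (simp add: norm_divide)
  thus ?thesis using eq a by (simp add: field_simps)
qed

lemma pow_bound:
  assumes M: "M \<in> carrier_mat n n" and n: "n > 0" and c: "c > rho M"
  shows "\<exists>K. \<forall>k p q. p < n \<longrightarrow> q < n \<longrightarrow> \<bar>(M ^\<^sub>m k) $$ (p,q)\<bar> \<le> K * c^k"
proof -
  have r0: "rho M \<ge> 0" unfolding rho_def using sr_nonneg[of _ n] M n by auto
  hence c0: "c > 0" using c by auto
  let ?A = "map_mat complex_of_real ((1/c) \<cdot>\<^sub>m M)"
  have A: "?A \<in> carrier_mat n n" using M by auto
  have "spectral_radius ?A \<le> (1/c) * rho M" by (rule sr_scaled_le[OF M n], use c0 in auto)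
  also have "\<dots> < 1" using c c0 by (simp add: field_simps)
  finally obtain K where K: "\<And>k. norm_bound (?A ^\<^sub>m k) K"
    using spectral_radius_jnf_norm_bound_less_1_upper_triangular[OF A] by auto
  show ?thesis
  proof (intro exI allI impI)
    fix k p q assume p: "p < n" and q: "q < n"
    have M1: "(1/c) \<cdot>\<^sub>m M \<in> carrier_mat n n" using M by auto
    have "?A ^\<^sub>m k = map_mat complex_of_real (((1/c) \<cdot>\<^sub>m M) ^\<^sub>m k)"
      by (rule of_real_hom.mat_hom_pow[OF M1, symmetric])
    also have "\<dots> = map_mat complex_of_real ((1/c)^k \<cdot>\<^sub>m M ^\<^sub>m k)" by (simp add: pow_smult[OF M])
    finally have eq: "?A ^\<^sub>m k = map_mat complex_of_real ((1/c)^k \<cdot>\<^sub>m M ^\<^sub>m k)" .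
    from K[of k] p q have "norm ((?A ^\<^sub>m k) $$ (p,q)) \<le> K" unfolding norm_bound_def using M by auto
    hence "\<bar>(1/c)^k * (M ^\<^sub>m k) $$ (p,q)\<bar> \<le> K" unfolding eq using p q M c0 by (auto simp: norm_mult norm_power norm_divide abs_mult power_abs)
    hence "(1/c)^k * \<bar>(M ^\<^sub>m k) $$ (p,q)\<bar> \<le> K" using c0 by (simp add: abs_mult)
    thus "\<bar>(M ^\<^sub>m k) $$ (p,q)\<bar> \<le> K * c^k" using c0 by (simp add: field_simps)
  qed
qed




definition phi :: "real mat \<Rightarrow> (nat \<Rightarrow> real) \<Rightarrow> nat \<Rightarrow> real" where
  "phi A y p = y p + mv A y p"

lemma iter_pos:
  assumes M: "M \<in> carrier_mat n n" and nn: "nonneg_mat M" and irr: "irreducible_mat M"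
    and y0: "\<forall>p<n. y p \<ge> 0" and p0: "p0 < n" "y p0 \<noteq> 0"
  shows "\<forall>p<n. ((phi M)^^n) y p > 0"
proof -
  define Y where "Y k = ((phi M)^^k) y" for k
  have YS: "Y (Suc k) p = Y k p + mv M (Y k) p" for k p unfolding Y_def phi_def by simp
  have nonneg: "\<forall>p<n. Y k p \<ge> 0" for k
  proof (induction k)
    case 0 then show ?case using y0 unfolding Y_def by simp
  next
    case (Suc k) then show ?case using mv_nonneg[OF M nn Suc] by (simp add: YS add_nonneg_nonneg)
  qed
  have grow: "Y k p \<le> Y (Suc k) p" if "p < n" for k p
    using mv_nonneg[OF M nn nonneg[of k] that] by (simp add: YS)
  have p0pos: "Y k p0 > 0" for k
  proof (induction k)
    case 0
    have "y p0 \<ge> 0" using y0 p0 by auto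
    with p0(2) show ?case unfolding Y_def by simp
  next
    case (Suc k) then show ?case using grow[OF p0(1), of k] by simp
  qed
  define Z where "Z k = {p. p < n \<and> Y k p = 0}" for k
  have finZ: "finite (Z k)" for k unfolding Z_def by auto
  have Zsub: "Z (Suc k) \<subseteq> Z k" for k
  proof
    fix p assume "p \<in> Z (Suc k)"
    hence p: "p < n" "Y (Suc k) p = 0" unfolding Z_def by auto
    have "Y k p \<le> 0" using grow[OF p(1), of k] p(2) by simp
    with nonneg[of k] p(1) have "Y k p = 0" by (meson antisym)
    thus "p \<in> Z k" using p unfolding Z_def by auto
  qed
  have Zne: "Z (Suc k) \<noteq> Z k" if ne: "Z k \<noteq> {}" for k
  proof
    assume eq: "Z (Suc k) = Z k"
    have "\<forall>i\<in>Z k. \<forall>j\<in>{0..<dim_row M} - Z k. M $$ (i,j) = 0"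
    proof (intro ballI)
      fix i j assume i: "i \<in> Z k" and j: "j \<in> {0..<dim_row M} - Z k"
      from i eq have i': "i \<in> Z (Suc k)" by simp
      hence "Y (Suc k) i = 0" "i < n" unfolding Z_def by auto
      moreover have "Y k i = 0" using i unfolding Z_def by auto
      ultimately have mv0: "mv M (Y k) i = 0" by (simp add: YS)
      have s0: "(\<Sum>q<n. M $$ (i,q) * Y k q) = 0" using mv0 M unfolding mv_def by simp
      have nt: "\<forall>q\<in>{..<n}. 0 \<le> M $$ (i,q) * Y k q"
        using nn nonneg[of k] \<open>i<n\<close> M unfolding nonneg_mat_def by auto
      have terms: "\<forall>q\<in>{..<n}. M $$ (i,q) * Y k q = 0"
        using sum_nonneg_eq_0_iff[OF finite_lessThan, of n "\<lambda>q. M $$ (i,q) * Y k q"] nt s0 by simp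
      have jn: "j < n" and Yj: "Y k j \<noteq> 0" using j M unfolding Z_def by auto
      from terms jn have "M $$ (i,j) * Y k j = 0" by auto
      with Yj show "M $$ (i,j) = 0" by simp
    qed
    moreover have "Z k \<subset> {0..<dim_row M}"
    proof -
      have "Z k \<subseteq> {0..<dim_row M}" using M unfolding Z_def by auto
      moreover have "p0 \<notin> Z k" using p0pos[of k] unfolding Z_def by auto
      ultimately show ?thesis using p0 M by auto
    qed
    ultimately have "\<exists>I. I \<noteq> {} \<and> I \<subset> {0..<dim_row M} \<and>
        (\<forall>i\<in>I. \<forall>j\<in>{0..<dim_row M} - I. M $$ (i,j) = 0)"
      using ne by (intro exI[of _ "Z k"]) simp
    thus False using irr unfolding irreducible_mat_def by blast
  qed
  have key: "Z k = {} \<or> card (Z k) + k < n" for k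
  proof (induction k)
    case 0
    have "Z 0 \<subseteq> {0..<n} - {p0}" using p0pos[of 0] unfolding Z_def by auto
    hence "card (Z 0) \<le> card ({0..<n} - {p0})" by (intro card_mono) auto
    then show ?case using p0 by auto
  next
    case (Suc k)
    show ?case
    proof (cases "Z k = {}")
      case True then show ?thesis using Zsub[of k] by auto
    next
      case False
      with Suc have c: "card (Z k) + k < n" by auto
      have "Z (Suc k) \<subset> Z k" using Zsub[of k] Zne[OF False] by auto
      hence "card (Z (Suc k)) < card (Z k)" using finZ by (intro psubset_card_mono) auto
      then show ?thesis using c by auto
    qed
  qed
  from key[of n] have "Z n = {}" by auto
  thus ?thesis using nonneg[of n] unfolding Z_def Y_def by (auto simp: order_le_less)
qed

lemma iter_lin:
  assumes M: "M \<in> carrier_mat n n"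
  shows "\<forall>p<n. ((phi M)^^k) (\<lambda>q. mv M x q - r * x q) p
      = mv M (((phi M)^^k) x) p - r * ((phi M)^^k) x p"
proof (induction k)
  case 0 then show ?case by simp
next
  case (Suc k)
  show ?case
  proof (intro allI impI)
    fix p assume p: "p < n"
    define z where "z = ((phi M)^^k) x"
    define d where "d = ((phi M)^^k) (\<lambda>q. mv M x q - r * x q)"
    have dz: "\<forall>q<n. d q = mv M z q - r * z q" using Suc unfolding d_def z_def by auto
    have "((phi M)^^Suc k) (\<lambda>q. mv M x q - r * x q) p = d p + mv M d p"
      unfolding d_def by (simp add: phi_def)
    also have "mv M d p = mv M (\<lambda>q. mv M z q - r * z q) p"
      by (rule mv_cong) (use dz M in auto)
    also have "\<dots> = mv M (mv M z) p - r * mv M z p" by (rule mv_diff)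
    finally have L: "((phi M)^^Suc k) (\<lambda>q. mv M x q - r * x q) p
        = mv M z p - r * z p + (mv M (mv M z) p - r * mv M z p)" using dz p by simp
    have "mv M (((phi M)^^Suc k) x) p = mv M (\<lambda>q. z q + mv M z q) p"
      unfolding z_def by (simp add: phi_def[abs_def])
    also have "\<dots> = mv M z p + mv M (mv M z) p" by (rule mv_add)
    finally show "((phi M)^^Suc k) (\<lambda>q. mv M x q - r * x q) p
      = mv M (((phi M)^^Suc k) x) p - r * ((phi M)^^Suc k) x p"
      unfolding L by (simp add: z_def phi_def algebra_simps)
  qed
qed

lemma pf_pos:
  assumes M: "M \<in> carrier_mat n n" and nn: "nonneg_mat M" and irr: "irreducible_mat M"
    and x0: "\<forall>p<n. x p \<ge> 0" and p0: "p0 < n" "x p0 \<noteq> 0"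
    and sub: "\<forall>p<n. mv M x p \<ge> rho M * x p"
  shows "\<forall>p<n. x p > 0"
proof -
  define r where "r = rho M"
  have n: "n > 0" using p0 by auto
  have r0: "r \<ge> 0" unfolding r_def rho_def using sr_nonneg[of _ n] M n by auto
  have eig: "\<forall>p<n. mv M x p = r * x p"
  proof (rule ccontr)
    assume "\<not> ?thesis"
    then obtain p1 where p1: "p1 < n" "mv M x p1 \<noteq> r * x p1" by auto
    define d where "d q = mv M x q - r * x q" for q
    have d0: "\<forall>q<n. d q \<ge> 0" using sub unfolding d_def r_def by auto
    have dp1: "d p1 \<noteq> 0" using p1 unfolding d_def by auto
    define x' where "x' = ((phi M)^^n) x"
    define d' where "d' = ((phi M)^^n) d"
    have x'pos: "\<forall>p<n. x' p > 0" unfolding x'_def by (rule iter_pos[OF M nn irr x0 p0])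
    have d'pos: "\<forall>p<n. d' p > 0" unfolding d'_def by (rule iter_pos[OF M nn irr d0 p1(1) dp1])
    have lin: "\<forall>p<n. d' p = mv M x' p - r * x' p"
      using iter_lin[OF M, of n x r] unfolding d'_def x'_def d_def by simp
    define delta where "delta = Min (d' ` {..<n})"
    define X where "X = Max (x' ` {..<n})"
    have delta: "delta > 0" unfolding delta_def using n d'pos by (subst Min_gr_iff) auto
    have deltale: "delta \<le> d' p" if "p < n" for p unfolding delta_def using that by auto
    have X: "X > 0" unfolding X_def using n x'pos by (subst Max_gr_iff) auto
    have Xge: "x' p \<le> X" if "p < n" for p unfolding X_def using that by auto
    define q where "q = r + delta / X"
    have qr: "q > r" unfolding q_def using delta X by auto
    have ge: "\<forall>p<n. mv M x' p \<ge> q * x' p"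
    proof (intro allI impI)
      fix p assume p: "p < n"
      have "delta / X * x' p \<le> delta / X * X"
        using Xge[OF p] delta X by (intro mult_left_mono) auto
      also have "\<dots> = delta" using X by simp
      finally have "delta / X * x' p \<le> d' p" using deltale[OF p] by simp
      thus "mv M x' p \<ge> q * x' p" using lin p unfolding q_def by (simp add: algebra_simps)
    qed
    have powge: "\<forall>p<n. mv (M ^\<^sub>m k) x' p \<ge> q^k * x' p" for k
    proof (induction k)
      case 0 then show ?case using M by (simp add: mv_one)
    next
      case (Suc k)
      show ?case
      proof (intro allI impI)
        fix p assume p: "p < n"
        have "mv (M ^\<^sub>m Suc k) x' p = mv (M ^\<^sub>m k) (mv M x') p"
          by (simp add: mv_mult[OF pow_carrier_mat[OF M] M p])
        also have "\<dots> \<ge> mv (M ^\<^sub>m k) (\<lambda>s. q * x' s) p"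
          by (rule mv_mono[OF pow_carrier_mat[OF M] nonneg_pow[OF M nn] _ p]) (use ge in auto)
        finally have "mv (M ^\<^sub>m Suc k) x' p \<ge> q * mv (M ^\<^sub>m k) x' p" by (simp add: mv_scale)
        moreover have "q * mv (M ^\<^sub>m k) x' p \<ge> q * (q^k * x' p)"
          using Suc p qr r0 by (intro mult_left_mono) auto
        ultimately show "mv (M ^\<^sub>m Suc k) x' p \<ge> q ^ Suc k * x' p" by (simp add: algebra_simps)
      qed
    qed
    define c where "c = (r + q) / 2"
    have cr: "c > r" and cq: "c < q" using qr unfolding c_def by auto
    have c0: "c > 0" using cr r0 by auto
    obtain K where K: "\<And>k p s. p < n \<Longrightarrow> s < n \<Longrightarrow> \<bar>(M ^\<^sub>m k) $$ (p,s)\<bar> \<le> K * c^k"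
      using pow_bound[OF M n, of c] cr unfolding r_def by auto
    have upper: "mv (M ^\<^sub>m k) x' p0 \<le> real n * (K * c^k * X)" for k
    proof -
      have "mv (M ^\<^sub>m k) x' p0 = (\<Sum>s<n. (M ^\<^sub>m k) $$ (p0,s) * x' s)" unfolding mv_def using M by simp
      also have "\<dots> \<le> (\<Sum>s<n. K * c^k * X)"
      proof (rule sum_mono)
        fix s assume s: "s \<in> {..<n}"
        have "(M ^\<^sub>m k) $$ (p0,s) * x' s \<le> \<bar>(M ^\<^sub>m k) $$ (p0,s)\<bar> * x' s"
          using x'pos s by (intro mult_right_mono) auto
        also have "\<dots> \<le> K * c^k * X"
          using K[OF p0(1), of s k] Xge[of s] x'pos s X
          by (intro mult_mono) auto
        finally show "(M ^\<^sub>m k) $$ (p0,s) * x' s \<le> K * c^k * X" .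
      qed
      finally show ?thesis by simp
    qed
    define A where "A = real n * K * X / x' p0"
    have xp0: "x' p0 > 0" using x'pos p0 by auto
    have bnd: "(q/c)^k \<le> A" for k
    proof -
      have "q^k * x' p0 \<le> mv (M ^\<^sub>m k) x' p0" using powge[of k] p0(1) by blast
      hence "q^k * x' p0 \<le> real n * (K * c^k * X)" using upper[of k] by linarith
      hence "q^k \<le> real n * K * X / x' p0 * c^k" using xp0 by (simp add: field_simps)
      thus ?thesis unfolding A_def using c0 by (simp add: power_divide field_simps)
    qed
    have "1 < q / c" using cq c0 by simp
    from real_arch_pow[OF this, of A] obtain k where "A < (q/c)^k" by auto
    from less_le_trans[OF this bnd[of k]] show False by simp
  qed
  show ?thesis
  proof (rule ccontr)
    assume "\<not> ?thesis"
    then obtain z where z: "z < n" "\<not> x z > 0" by blast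
    have xz: "x z = 0" using x0[rule_format, OF z(1)] z(2) by linarith
    define I where "I = {p. p < n \<and> x p = 0}"
    have zI: "z \<in> I" unfolding I_def using z(1) xz by simp
    hence Ine: "I \<noteq> {}" by blast
    have I1: "I \<subseteq> {0..<n}" unfolding I_def by auto
    have I2: "p0 \<notin> I" unfolding I_def using p0 by simp
    have Isub: "I \<subset> {0..<dim_row M}" using I1 I2 p0(1) M by auto
    have allz: "\<forall>i\<in>I. \<forall>j\<in>{0..<dim_row M} - I. M $$ (i,j) = 0"
    proof (intro ballI)
      fix i j assume i: "i \<in> I" and j: "j \<in> {0..<dim_row M} - I"
      have ilt: "i < n" and xi: "x i = 0" using i unfolding I_def by auto
      have "mv M x i = 0" using eig ilt xi by simp
      hence s0: "(\<Sum>s<n. M $$ (i,s) * x s) = 0" using M unfolding mv_def by simp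
      have nt: "\<forall>s\<in>{..<n}. 0 \<le> M $$ (i,s) * x s"
        using nn x0 ilt M unfolding nonneg_mat_def by auto
      have terms: "\<forall>s\<in>{..<n}. M $$ (i,s) * x s = 0"
        using sum_nonneg_eq_0_iff[OF finite_lessThan, of n "\<lambda>s. M $$ (i,s) * x s"] nt s0 by simp
      have jn: "j < n" using j M by auto
      have xj: "x j \<noteq> 0" using j jn unfolding I_def by auto
      from terms jn have "M $$ (i,j) * x j = 0" by auto
      with xj show "M $$ (i,j) = 0" by simp
    qed
    have "\<exists>I. I \<noteq> {} \<and> I \<subset> {0..<dim_row M} \<and>
        (\<forall>i\<in>I. \<forall>j\<in>{0..<dim_row M} - I. M $$ (i,j) = 0)"
      by (rule exI[of _ I]) (use Ine Isub allz in simp)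
    thus False using irr unfolding irreducible_mat_def by blast
  qed
qed




lemma pos_less: assumes "finite K" "p \<in> K" shows "pos K p < card K"
proof -
  have "{a\<in>K. a < p} \<subset> K" using assms by auto
  thus ?thesis unfolding pos_def using assms by (intro psubset_card_mono) auto
qed

lemma pos_pick: "t < card K \<Longrightarrow> pos K (pick K t) = t"
  unfolding pos_def using card_pick_le by auto

lemma pick_pos: "p \<in> K \<Longrightarrow> pick K (pos K p) = p"
  unfolding pos_def by (rule pick_card_in_set)

lemma pick_in: "t < card K \<Longrightarrow> pick K t \<in> K"
  using pick_in_set_le by auto

lemma pick_bij: assumes "finite K" shows "bij_betw (pick K) {..<card K} K"
proof (rule bij_betw_imageI)
  show "inj_on (pick K) {..<card K}"
  proof (rule inj_onI)
    fix a b assume "a \<in> {..<card K}" "b \<in> {..<card K}" "pick K a = pick K b"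
    then show "a = b" using pos_pick by (metis lessThan_iff)
  qed
  show "pick K ` {..<card K} = K"
  proof
    show "pick K ` {..<card K} \<subseteq> K" using pick_in by auto
    show "K \<subseteq> pick K ` {..<card K}"
    proof
      fix p assume p: "p \<in> K"
      have "pos K p < card K" by (rule pos_less[OF assms p])
      then show "p \<in> pick K ` {..<card K}" using pick_pos[OF p] by (metis imageI lessThan_iff)
    qed
  qed
qed

lemma sum_pick: assumes "finite K" shows "(\<Sum>t<card K. f (pick K t)) = (\<Sum>p\<in>K. f p)"
  using sum.reindex_bij_betw[OF pick_bij[OF assms], of f] .

lemma card_sub_set: "K \<subseteq> {0..<n} \<Longrightarrow> {i. i < n \<and> i \<in> K} = K" by auto

lemma sub_sr_less:
  assumes M: "M \<in> carrier_mat n n" and nn: "nonneg_mat M" and irr: "irreducible_mat M"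
    and T: "T \<subseteq> {0..<n}" "T \<noteq> {}" and i0: "i0 < n" "i0 \<notin> T"
  shows "rho (submatrix M T T) < rho M"
proof (rule ccontr)
  assume "\<not> ?thesis" hence le: "rho M \<le> rho (submatrix M T T)" by simp
  define m where "m = card T"
  have finT: "finite T" using finite_subset[OF T(1)] by simp
  have m: "m > 0" unfolding m_def using finT T(2) by (simp add: card_gt_0_iff)
  have cardT: "{i. i < n \<and> i \<in> T} = T" using T by auto
  define B where "B = submatrix M T T"
  have dr: "dim_row M = n" "dim_col M = n" using M by auto
  have B: "B \<in> carrier_mat m m"
  proof -
    have "dim_row B = m" "dim_col B = m" unfolding B_def m_def by (simp_all only: dim_submatrix dr cardT)
    thus ?thesis by auto
  qed
  have Bij: "B $$ (a,b) = M $$ (pick T a, pick T b)" if "a<m" "b<m" for a b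
    unfolding B_def by (rule submatrix_index) (unfold dr cardT, use that m_def in auto)
  let ?CB = "map_mat complex_of_real B"
  have CB: "?CB \<in> carrier_mat m m" using B by auto
  from spectral_radius_mem_max(1)[OF CB m] obtain mu where mu: "mu \<in> spectrum ?CB"
    and eq: "spectral_radius ?CB = cmod mu" by auto
  obtain y where ev: "eigenvector ?CB y mu" using mu unfolding spectrum_def eigenvalue_def by auto
  hence y: "y \<in> carrier_vec m" "y \<noteq> 0\<^sub>v m" "?CB *\<^sub>v y = mu \<cdot>\<^sub>v y"
    unfolding eigenvector_def using CB by auto
  have rB: "rho B = cmod mu" unfolding rho_def eq ..
  define x where "x p = (if p \<in> T then cmod (y $ pos T p) else 0)" for p
  have pickT: "pick T t \<in> T" if "t < m" for t using pick_in that m_def by auto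
  have pospick: "pos T (pick T t) = t" if "t<m" for t using pos_pick that m_def by auto
  have posless: "pos T p < m" if "p\<in>T" for p using pos_less[OF finT that] m_def by auto
  have x0: "\<forall>p<n. x p \<ge> 0" by (simp add: x_def)
  obtain t0 where t0: "t0 < m" "y $ t0 \<noteq> 0"
  proof (rule ccontr)
    assume "\<not> thesis"
    hence "\<forall>t<m. y $ t = 0" using that by blast
    hence "y = 0\<^sub>v m" using y(1) by (intro eq_vecI) auto
    thus False using y(2) by simp
  qed
  have pt0: "pick T t0 < n" using pickT[OF t0(1)] T by auto
  have xnz: "x (pick T t0) \<noteq> 0" unfolding x_def using pickT[OF t0(1)] pospick[OF t0(1)] t0(2) by simp
  have sub: "\<forall>p<n. mv M x p \<ge> rho M * x p"
  proof (intro allI impI)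
    fix p assume p: "p < n"
    show "mv M x p \<ge> rho M * x p"
    proof (cases "p \<in> T")
      case False
      then have "x p = 0" by (simp add: x_def)
      with mv_nonneg[OF M nn x0 p] show ?thesis by simp
    next
      case True
      have "mv M x p = (\<Sum>q<n. M$$(p,q) * x q)" using M by (simp add: mv_def)
      also have "\<dots> = (\<Sum>q\<in>T. M$$(p,q) * cmod (y $ pos T q))"
        by (rule sum.mono_neutral_cong_right) (use T in \<open>auto simp: x_def\<close>)
      also have "\<dots> = (\<Sum>t<m. M$$(p, pick T t) * cmod (y $ pos T (pick T t)))"
        unfolding m_def by (rule sum_pick[OF finT, symmetric])
      also have "\<dots> = (\<Sum>t<m. B$$(pos T p, t) * cmod (y $ t))"
        by (rule sum.cong) (use Bij posless True pospick pick_pos in auto)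
      finally have eq1: "mv M x p = (\<Sum>t<m. B$$(pos T p, t) * cmod (y $ t))" .
      have "cmod ((?CB *\<^sub>v y) $ pos T p) = cmod (\<Sum>t<m. complex_of_real (B$$(pos T p,t)) * y$t)"
        using mult_vec_entry[OF CB y(1) posless[OF True]] B posless[OF True] by simp
      also have "\<dots> \<le> (\<Sum>t<m. cmod (complex_of_real (B$$(pos T p,t)) * y$t))" by (rule norm_sum)
      also have "\<dots> = (\<Sum>t<m. B$$(pos T p, t) * cmod (y $ t))"
      proof (rule sum.cong)
        fix t assume t: "t \<in> {..<m}"
        have e: "B$$(pos T p, t) = M$$(p, pick T t)" using Bij[OF posless[OF True]] t pick_pos[OF True] by simp
        have "pick T t < n" using pickT[of t] t T by auto
        hence "B$$(pos T p, t) \<ge> 0" unfolding e using nn p M unfolding nonneg_mat_def by auto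
        thus "cmod (complex_of_real (B$$(pos T p,t)) * y$t) = B$$(pos T p, t) * cmod (y $ t)"
          by (simp add: norm_mult)
      qed simp
      finally have "cmod ((?CB *\<^sub>v y) $ pos T p) \<le> mv M x p" using eq1 by simp
      moreover have "cmod ((?CB *\<^sub>v y) $ pos T p) = cmod mu * x p"
        using y(3) y(1) posless[OF True] True by (simp add: x_def norm_mult)
      moreover have "rho M * x p \<le> rho B * x p" using le x0 p unfolding B_def
        by (intro mult_right_mono) auto
      ultimately show ?thesis using rB by simp
    qed
  qed
  from pf_pos[OF M nn irr x0 pt0 xnz sub] i0 have "x i0 > 0" by auto
  thus False using i0 by (simp add: x_def)
qed




lemma geom_carrier: "C \<in> carrier_mat m m \<Longrightarrow> geom_mat C l \<in> carrier_mat m m"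
  by (induction l) auto

lemma geom_entry:
  assumes C: "C \<in> carrier_mat m m" and a: "a < m" and b: "b < m"
  shows "geom_mat C l $$ (a,b) = (\<Sum>k<Suc l. (C ^\<^sub>m k) $$ (a,b))"
proof (induction l)
  case 0 then show ?case using C a b by simp
next
  case (Suc l)
  have "geom_mat C (Suc l) $$ (a,b) = geom_mat C l $$ (a,b) + (C ^\<^sub>m Suc l) $$ (a,b)"
  proof -
    have d: "dim_row (C ^\<^sub>m Suc l) = m" "dim_col (C ^\<^sub>m Suc l) = m"
      using pow_carrier_mat[OF C, of "Suc l"] by auto
    show ?thesis using d a b by (simp del: pow_mat.simps)
  qed
  then show ?case using Suc by simp
qed

lemma inv_unique:
  assumes A: "(A::real mat) \<in> carrier_mat m m" and Q: "Q \<in> carrier_mat m m"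
    and QA: "Q * A = 1\<^sub>m m"
  shows "mat_inv A = Q"
proof -
  have AQ: "A * Q = 1\<^sub>m m" using mat_mult_left_right_inverse[OF Q A QA] .
  show ?thesis unfolding mat_inv_def
  proof (rule the_equality)
    show "inverts_mat A Q \<and> inverts_mat Q A" unfolding inverts_mat_def using A Q AQ QA by auto
  next
    fix Q' assume "inverts_mat A Q' \<and> inverts_mat Q' A"
    hence 1: "A * Q' = 1\<^sub>m m" and 2: "Q' * A = 1\<^sub>m (dim_row Q')" unfolding inverts_mat_def using A by auto
    have c1: "dim_col Q' = m" using arg_cong[OF 1, of dim_col] by simp
    have c2: "dim_row Q' = m" using arg_cong[OF 2, of dim_col] A by simp
    have Q': "Q' \<in> carrier_mat m m" using c1 c2 by auto
    have "Q' = Q' * (A * Q)" using AQ Q' by simp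
    also have "\<dots> = (Q' * A) * Q" using assoc_mult_mat[OF Q' A Q] by simp
    also have "\<dots> = Q" using 2 c2 Q by simp
    finally show "Q' = Q" .
  qed
qed

lemma neumann:
  fixes B :: "real mat"
  assumes B: "B \<in> carrier_mat m m" and m: "m > 0" and r: "r > rho B"
  shows "\<exists>P \<in> carrier_mat m m. (\<forall>a<m. \<forall>b<m. (\<lambda>l. geom_mat ((1/r) \<cdot>\<^sub>m B) l $$ (a,b)) \<longlonglongrightarrow> P $$ (a,b))
         \<and> mat_inv (B - r \<cdot>\<^sub>m 1\<^sub>m m) = (-(1/r)) \<cdot>\<^sub>m P"
proof -
  have rB0: "rho B \<ge> 0" unfolding rho_def using sr_nonneg[of _ m] B m by auto
  have r0: "r > 0" using r rB0 by auto
  define c where "c = (rho B + r) / 2"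
  have cB: "c > rho B" and cr: "c < r" using r unfolding c_def by auto
  have c0: "c > 0" using cB rB0 by auto
  obtain K where K: "\<And>k a b. a < m \<Longrightarrow> b < m \<Longrightarrow> \<bar>(B ^\<^sub>m k) $$ (a,b)\<bar> \<le> K * c^k"
    using pow_bound[OF B m cB] by auto
  define C where "C = (1/r) \<cdot>\<^sub>m B"
  have C: "C \<in> carrier_mat m m" unfolding C_def using B by auto
  define f where "f a b k = (C ^\<^sub>m k) $$ (a,b)" for a b k
  have fB: "f a b k = (1/r)^k * (B ^\<^sub>m k) $$ (a,b)" if "a < m" "b < m" for a b k
    unfolding f_def C_def pow_smult[OF B] using that B by simp
  have bound: "norm (f a b k) \<le> K * (c/r)^k" if "a < m" "b < m" for a b k
  proof -
    have "norm (f a b k) = (1/r)^k * \<bar>(B ^\<^sub>m k) $$ (a,b)\<bar>" using fB[OF that] r0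
      by (simp add: abs_mult power_abs)
    also have "\<dots> \<le> (1/r)^k * (K * c^k)" using K[OF that] r0 by (intro mult_left_mono) auto
    also have "\<dots> = K * (c/r)^k" by (simp add: power_divide)
    finally show ?thesis .
  qed
  have summ: "summable (f a b)" if "a < m" "b < m" for a b
  proof (rule summable_comparison_test)
    show "\<exists>N. \<forall>n\<ge>N. norm (f a b n) \<le> K * (c/r)^n" using bound[OF that] by auto
    show "summable (\<lambda>n. K * (c/r)^n)" using c0 cr r0 by (intro summable_mult summable_geometric) auto
  qed
  define P where "P = mat m m (\<lambda>(a,b). suminf (f a b))"
  have P: "P \<in> carrier_mat m m" unfolding P_def by auto
  have Pij: "P $$ (a,b) = suminf (f a b)" if "a < m" "b < m" for a b unfolding P_def using that by simp
  have conv: "(\<lambda>l. geom_mat C l $$ (a,b)) \<longlonglongrightarrow> P $$ (a,b)" if ab: "a < m" "b < m" for a b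
  proof -
    have "(\<lambda>l. \<Sum>k<l. f a b k) \<longlonglongrightarrow> suminf (f a b)" by (rule summable_LIMSEQ[OF summ[OF ab]])
    hence "(\<lambda>l. \<Sum>k<Suc l. f a b k) \<longlonglongrightarrow> suminf (f a b)" by (rule LIMSEQ_Suc)
    thus ?thesis using geom_entry[OF C ab] Pij[OF ab] unfolding f_def by simp
  qed
  have PC: "P * (1\<^sub>m m - C) = 1\<^sub>m m"
  proof (rule eq_matI)
    fix a b assume a: "a < dim_row (1\<^sub>m m :: real mat)" and b: "b < dim_col (1\<^sub>m m :: real mat)"
    hence a: "a < m" and b: "b < m" by auto
    have D: "1\<^sub>m m - C \<in> carrier_mat m m" using C by auto
    have "(P * (1\<^sub>m m - C)) $$ (a,b) = (\<Sum>t<m. P $$ (a,t) * ((if t = b then 1 else 0) - C $$ (t,b)))"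
      using mult_entry[OF P D a b] C b by (auto intro!: sum.cong)
    also have "\<dots> = (\<Sum>t<m. (if t = b then P $$ (a,t) else 0) - P $$ (a,t) * C $$ (t,b))"
      by (rule sum.cong) (auto simp: algebra_simps)
    also have "\<dots> = (\<Sum>t<m. (if t = b then P $$ (a,t) else 0)) - (\<Sum>t<m. P $$ (a,t) * C $$ (t,b))"
      by (rule sum_subtractf)
    also have "(\<Sum>t<m. (if t = b then P $$ (a,t) else 0)) = P $$ (a,b)" using b by simp
    also have "(\<Sum>t<m. P $$ (a,t) * C $$ (t,b)) = (\<Sum>t<m. suminf (\<lambda>k. f a t k * C $$ (t,b)))"
      by (rule sum.cong) (use Pij a summ in \<open>auto simp: suminf_mult2\<close>)
    also have "\<dots> = suminf (\<lambda>k. \<Sum>t<m. f a t k * C $$ (t,b))"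
      by (rule suminf_sum[where I="{..<m}" and f="\<lambda>t k. f a t k * C $$ (t,b)", symmetric])
         (use summ a in \<open>auto intro: summable_mult2\<close>)
    also have "(\<lambda>k. \<Sum>t<m. f a t k * C $$ (t,b)) = (\<lambda>k. f a b (Suc k))"
    proof
      fix k
      show "(\<Sum>t<m. f a t k * C $$ (t,b)) = f a b (Suc k)"
        unfolding f_def using mult_entry[OF pow_carrier_mat[OF C] C a b, of k] by simp
    qed
    also have "suminf (\<lambda>k. f a b (Suc k)) = suminf (f a b) - f a b 0"
      by (rule suminf_split_head[OF summ[OF a b]])
    also have "f a b 0 = (if a = b then 1 else 0)" unfolding f_def using C a b by simp
    finally show "(P * (1\<^sub>m m - C)) $$ (a,b) = 1\<^sub>m m $$ (a,b)" using a b Pij[OF a b] by simp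
  qed (use P C in auto)
  define A where "A = B - r \<cdot>\<^sub>m 1\<^sub>m m"
  have A: "A \<in> carrier_mat m m" unfolding A_def using B by auto
  define Q where "Q = (-(1/r)) \<cdot>\<^sub>m P"
  have Q: "Q \<in> carrier_mat m m" unfolding Q_def using P by auto
  have "Q * A = P * (1\<^sub>m m - C)"
  proof (rule eq_matI)
    fix a b assume "a < dim_row (P * (1\<^sub>m m - C))" "b < dim_col (P * (1\<^sub>m m - C))"
    hence a: "a < m" and b: "b < m" using P C by auto
    have D: "1\<^sub>m m - C \<in> carrier_mat m m" using C by auto
    show "(Q * A) $$ (a,b) = (P * (1\<^sub>m m - C)) $$ (a,b)"
      unfolding mult_entry[OF Q A a b] mult_entry[OF P D a b]
    proof (rule sum.cong)
      fix t assume t: "t \<in> {..<m}"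
      show "Q $$ (a,t) * A $$ (t,b) = P $$ (a,t) * (1\<^sub>m m - C) $$ (t,b)"
        unfolding Q_def A_def C_def using a b t B P r0 by (auto simp: field_simps)
    qed simp
  qed (use P C Q A in auto)
  hence QA: "Q * A = 1\<^sub>m m" using PC by simp
  have "mat_inv A = Q" by (rule inv_unique[OF A Q QA])
  thus ?thesis using P conv unfolding A_def Q_def C_def by auto
qed




lemma sub_carrier:
  assumes M: "M \<in> carrier_mat n n" and I: "I \<subseteq> {0..<n}" and J: "J \<subseteq> {0..<n}"
  shows "submatrix M I J \<in> carrier_mat (card I) (card J)"
proof -
  have dr: "dim_row M = n" "dim_col M = n" using M by auto
  have cI: "{i. i < n \<and> i \<in> I} = I" using I by auto
  have cJ: "{i. i < n \<and> i \<in> J} = J" using J by auto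
  have "dim_row (submatrix M I J) = card I" "dim_col (submatrix M I J) = card J"
    by (simp_all only: dim_submatrix dr cI cJ)
  thus ?thesis by auto
qed

lemma prod_lim:
  fixes X Y P :: "real mat"
  assumes X: "X \<in> carrier_mat p m" and Y: "Y \<in> carrier_mat m q" and G: "\<And>l. G l \<in> carrier_mat m m"
    and P: "P \<in> carrier_mat m m" and conv: "\<forall>s<m. \<forall>t<m. (\<lambda>l. G l $$ (s,t)) \<longlonglongrightarrow> P $$ (s,t)"
    and a: "a < p" and b: "b < q"
  shows "(\<lambda>l. (X * G l * Y) $$ (a,b)) \<longlonglongrightarrow> (X * P * Y) $$ (a,b)"
proof -
  have e: "(X * H * Y) $$ (a,b) = (\<Sum>t<m. (\<Sum>s<m. X $$ (a,s) * H $$ (s,t)) * Y $$ (t,b))"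
    if H: "H \<in> carrier_mat m m" for H
  proof -
    have XH: "X * H \<in> carrier_mat p m" using X H by auto
    show ?thesis unfolding mult_entry[OF XH Y a b]
      by (rule sum.cong) (use mult_entry[OF X H a] in auto)
  qed
  show ?thesis unfolding e[OF G] e[OF P]
    by (intro tendsto_intros) (use conv in auto)
qed

lemma Gamma_full:
  assumes M: "M \<in> carrier_mat n n" and i: "i < n" and j: "j < n"
    and l: "l \<ge> 2 * (\<Sum>p<n. \<Sum>q<n. dist_G M p q)"
  shows "Gamma M l i j = {0..<n}"
proof -
  define L where "L = (\<Sum>p<n. \<Sum>q<n. dist_G M p q)"
  have dle: "dist_G M p q \<le> L" if "p < n" "q < n" for p q
  proof -
    have "dist_G M p q \<le> (\<Sum>q<n. dist_G M p q)"
      by (rule member_le_sum[of q "{..<n}" "\<lambda>q. dist_G M p q"]) (use that in auto)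
    also have "\<dots> \<le> L" unfolding L_def using that
      by (intro member_le_sum[of p "{..<n}" "\<lambda>p. \<Sum>q<n. dist_G M p q"]) auto
    finally show ?thesis .
  qed
  have sub1: "{0..<n} \<subseteq> {k. k < dim_row M \<and> dist_G M i k + dist_G M k j \<le> l \<and> dist_G M j k + dist_G M k i \<le> l}"
  proof
    fix k assume "k \<in> {0..<n}"
    hence k: "k < n" by auto
    have "dist_G M i k + dist_G M k j \<le> l" using dle[OF i k] dle[OF k j] l unfolding L_def by linarith
    moreover have "dist_G M j k + dist_G M k i \<le> l" using dle[OF j k] dle[OF k i] l unfolding L_def by linarith
    ultimately show "k \<in> {k. k < dim_row M \<and> dist_G M i k + dist_G M k j \<le> l \<and> dist_G M j k + dist_G M k i \<le> l}"
      using k M by auto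
  qed
  have sub2: "{k. k < dim_row M \<and> dist_G M i k + dist_G M k j \<le> l \<and> dist_G M j k + dist_G M k i \<le> l} \<subseteq> {0..<n}"
    using M by auto
  from sub1 sub2 have "{k. k < dim_row M \<and> dist_G M i k + dist_G M k j \<le> l \<and> dist_G M j k + dist_G M k i \<le> l} = {0..<n}"
    by (rule subset_antisym[rotated])
  hence eq: "{k. k < dim_row M \<and> dist_G M i k + dist_G M k j \<le> l \<and> dist_G M j k + dist_G M k i \<le> l} = {0..<n}" .
  have "{0..<n} \<union> {i,j} = {0..<n}" using i j by auto
  thus ?thesis unfolding Gamma_def eq .
qed

lemma iso_lim:
  assumes M: "M \<in> carrier_mat n n" and nn: "nonneg_mat M" and irr: "irreducible_mat M"
    and n3: "n \<ge> 3" and i: "i < n" and j: "j < n" and ij: "i \<noteq> j" and a: "a < 2" and b: "b < 2"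
  shows "(\<lambda>l. isoradial_l l i j M $$ (a,b)) \<longlonglongrightarrow> isoradial {i,j} M $$ (a,b)"
proof -
  define S where "S = {i,j}"
  define T where "T = {0..<n} - S"
  define m where "m = card T"
  define r where "r = rho M"
  have S: "S \<subseteq> {0..<n}" unfolding S_def using i j by auto
  have cS: "card S = 2" unfolding S_def using ij by auto
  have T: "T \<subseteq> {0..<n}" unfolding T_def by auto
  have mcard: "m = n - 2" unfolding m_def T_def using card_Diff_subset[OF finite_subset[OF S] S] cS by simp
  have m: "m > 0" using mcard n3 by auto
  have Tne: "T \<noteq> {}" using m unfolding m_def by auto
  have iT: "i \<notin> T" unfolding T_def S_def by auto
  define B where "B = submatrix M T T"
  have B: "B \<in> carrier_mat m m" unfolding B_def m_def by (rule sub_carrier[OF M T T])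
  have rB: "rho B < r" unfolding B_def r_def by (rule sub_sr_less[OF M nn irr T Tne i iT])
  obtain P where P: "P \<in> carrier_mat m m"
    and conv: "\<forall>s<m. \<forall>t<m. (\<lambda>l. geom_mat ((1/r) \<cdot>\<^sub>m B) l $$ (s,t)) \<longlonglongrightarrow> P $$ (s,t)"
    and inv: "mat_inv (B - r \<cdot>\<^sub>m 1\<^sub>m m) = (-(1/r)) \<cdot>\<^sub>m P"
    using neumann[OF B m rB] by blast
  define X where "X = submatrix M S T"
  define Y where "Y = submatrix M T S"
  define Z where "Z = submatrix M S S"
  have X: "X \<in> carrier_mat 2 m" unfolding X_def m_def using sub_carrier[OF M S T] cS by simp
  have Y: "Y \<in> carrier_mat m 2" unfolding Y_def m_def using sub_carrier[OF M T S] cS by simp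
  have Z: "Z \<in> carrier_mat 2 2" unfolding Z_def using sub_carrier[OF M S S] cS by simp
  define G where "G l = geom_mat ((1/r) \<cdot>\<^sub>m B) l" for l
  have G: "G l \<in> carrier_mat m m" for l unfolding G_def by (rule geom_carrier) (use B in auto)
  define L where "L = 2 * (\<Sum>p<n. \<Sum>q<n. dist_G M p q)"
  have eqL: "isoradial_l l i j M = Z + (1/r) \<cdot>\<^sub>m (X * G l * Y)" if "l \<ge> L" for l
  proof -
    have "Gamma M l i j = {0..<n}" by (rule Gamma_full[OF M i j]) (use that in \<open>simp add: L_def\<close>)
    hence Gm: "Gamma M l i j - {i,j} = T" unfolding T_def S_def by simp
    show ?thesis unfolding isoradial_l_def Let_def Gm X_def Y_def Z_def G_def B_def r_def S_def
      by (rule refl)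
  qed
  have XPY: "X * P * Y \<in> carrier_mat 2 2" using X P Y by auto
  have XGY: "X * G l * Y \<in> carrier_mat 2 2" for l using X G Y by auto
  have eqI: "isoradial {i,j} M = Z - X * ((-(1/r)) \<cdot>\<^sub>m P) * Y"
  proof -
    have dr: "dim_row M = n" using M by auto
    have "isoradial {i,j} M = Z - X * mat_inv (B - r \<cdot>\<^sub>m 1\<^sub>m m) * Y"
      unfolding isoradial_def Let_def dr X_def Y_def Z_def B_def r_def m_def T_def S_def by (rule refl)
    thus ?thesis unfolding inv .
  qed
  have "X * ((-(1/r)) \<cdot>\<^sub>m P) * Y = (-(1/r)) \<cdot>\<^sub>m (X * P * Y)"
    using mult_smult_distrib[OF X P] mult_smult_assoc_mat[of "X * P" 2 m Y 2] X P Y by auto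
  hence isoval: "isoradial {i,j} M $$ (a,b) = Z $$ (a,b) + (1/r) * (X * P * Y) $$ (a,b)"
  proof -
    have d: "dim_row (X * P * Y) = 2" "dim_col (X * P * Y) = 2" using XPY by auto
    show ?thesis unfolding eqI \<open>X * ((-(1/r)) \<cdot>\<^sub>m P) * Y = (-(1/r)) \<cdot>\<^sub>m (X * P * Y)\<close>
      using a b d by simp
  qed
  have ev: "\<forall>\<^sub>F l in sequentially. Z $$ (a,b) + (1/r) * (X * G l * Y) $$ (a,b) = isoradial_l l i j M $$ (a,b)"
  proof (rule eventually_sequentiallyI[of L])
    fix l assume "L \<le> l"
    show "Z $$ (a,b) + (1/r) * (X * G l * Y) $$ (a,b) = isoradial_l l i j M $$ (a,b)"
    proof -
      have d: "dim_row (X * G l * Y) = 2" "dim_col (X * G l * Y) = 2" using XGY[of l] by auto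
      show ?thesis using eqL[OF \<open>L \<le> l\<close>] a b d by simp
    qed
  qed
  have "(\<lambda>l. Z $$ (a,b) + (1/r) * (X * G l * Y) $$ (a,b)) \<longlonglongrightarrow> Z $$ (a,b) + (1/r) * (X * P * Y) $$ (a,b)"
    by (intro tendsto_intros prod_lim[OF X Y G P _ a b]) (use conv in \<open>auto simp: G_def\<close>)
  from tendsto_cong[OF ev] this show ?thesis unfolding isoval by simp
qed




definition msk :: "nat set \<Rightarrow> real mat \<Rightarrow> real mat" where
  "msk U A = mat (dim_row A) (dim_col A) (\<lambda>(p,q). if p \<in> U \<and> q \<in> U then A $$ (p,q) else 0)"

definition cmsk :: "nat set \<Rightarrow> real mat \<Rightarrow> real mat" where
  "cmsk U A = mat (dim_row A) (dim_col A) (\<lambda>(p,q). if q \<in> U then A $$ (p,q) else 0)"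

definition mle :: "nat \<Rightarrow> real mat \<Rightarrow> real mat \<Rightarrow> bool" where
  "mle n A B \<longleftrightarrow> A \<in> carrier_mat n n \<and> B \<in> carrier_mat n n \<and>
     (\<forall>p<n. \<forall>q<n. 0 \<le> A $$ (p,q) \<and> A $$ (p,q) \<le> B $$ (p,q))"

lemma msk_carrier: "A \<in> carrier_mat n n \<Longrightarrow> msk U A \<in> carrier_mat n n"
  unfolding msk_def by auto
lemma cmsk_carrier: "A \<in> carrier_mat n n \<Longrightarrow> cmsk U A \<in> carrier_mat n n"
  unfolding cmsk_def by auto

lemma sub_entry:
  assumes M: "M \<in> carrier_mat n n" and I: "I \<subseteq> {0..<n}" and J: "J \<subseteq> {0..<n}"
    and a: "a < card I" and b: "b < card J"
  shows "submatrix M I J $$ (a,b) = M $$ (pick I a, pick J b)"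
proof -
  have dr: "dim_row M = n" "dim_col M = n" using M by auto
  have cI: "{i. i < n \<and> i \<in> I} = I" using I by auto
  have cJ: "{i. i < n \<and> i \<in> J} = J" using J by auto
  show ?thesis by (rule submatrix_index) (unfold dr cI cJ, use a b in auto)
qed

lemma sub_mult:
  assumes A: "A \<in> carrier_mat n n" and B: "B \<in> carrier_mat n n"
    and I: "I \<subseteq> {0..<n}" and J: "J \<subseteq> {0..<n}" and K: "K \<subseteq> {0..<n}"
  shows "submatrix A I K * submatrix B K J = submatrix (cmsk K A * B) I J"
proof -
  have CA: "cmsk K A * B \<in> carrier_mat n n" by (rule mult_carrier_mat[OF cmsk_carrier[OF A] B])
  have s1: "submatrix A I K \<in> carrier_mat (card I) (card K)" by (rule sub_carrier[OF A I K])
  have s2: "submatrix B K J \<in> carrier_mat (card K) (card J)" by (rule sub_carrier[OF B K J])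
  have s3: "submatrix (cmsk K A * B) I J \<in> carrier_mat (card I) (card J)" by (rule sub_carrier[OF CA I J])
  have finK: "finite K" using finite_subset[OF K] by simp
  show ?thesis
  proof (rule eq_matI)
    fix a b assume "a < dim_row (submatrix (cmsk K A * B) I J)" "b < dim_col (submatrix (cmsk K A * B) I J)"
    hence a: "a < card I" and b: "b < card J" using s3 by auto
    have pa: "pick I a < n" using pick_in[OF a] I by auto
    have pb: "pick J b < n" using pick_in[OF b] J by auto
    have "(submatrix A I K * submatrix B K J) $$ (a,b)
        = (\<Sum>t<card K. A $$ (pick I a, pick K t) * B $$ (pick K t, pick J b))"
      unfolding mult_entry[OF s1 s2 a b]
      by (rule sum.cong) (use sub_entry[OF A I K a] sub_entry[OF B K J _ b] in auto)
    also have "\<dots> = (\<Sum>p\<in>K. A $$ (pick I a, p) * B $$ (p, pick J b))"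
      by (rule sum_pick[OF finK, of "\<lambda>p. A $$ (pick I a, p) * B $$ (p, pick J b)"])
    also have "\<dots> = (\<Sum>p<n. (if p \<in> K then A $$ (pick I a, p) else 0) * B $$ (p, pick J b))"
      by (rule sum.mono_neutral_cong_left) (use K in auto)
    also have "\<dots> = (cmsk K A * B) $$ (pick I a, pick J b)"
      unfolding mult_entry[OF cmsk_carrier[OF A] B pa pb]
      by (rule sum.cong) (use pa A in \<open>auto simp: cmsk_def\<close>)
    also have "\<dots> = submatrix (cmsk K A * B) I J $$ (a,b)" using sub_entry[OF CA I J a b] by simp
    finally show "(submatrix A I K * submatrix B K J) $$ (a,b) = submatrix (cmsk K A * B) I J $$ (a,b)" .
  qed (use s1 s2 s3 in auto)
qed

lemma cmsk_rowzero:
  assumes X: "X \<in> carrier_mat n n" and N: "N \<in> carrier_mat n n"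
    and z: "\<forall>p<n. \<forall>q<n. p \<notin> U \<longrightarrow> N $$ (p,q) = 0"
  shows "cmsk U X * N = X * N"
proof (rule eq_matI)
  fix a b assume "a < dim_row (X * N)" "b < dim_col (X * N)"
  hence a: "a < n" and b: "b < n" using X N by auto
  show "(cmsk U X * N) $$ (a,b) = (X * N) $$ (a,b)"
    unfolding mult_entry[OF cmsk_carrier[OF X] N a b] mult_entry[OF X N a b]
    by (rule sum.cong) (use a X z b in \<open>auto simp: cmsk_def\<close>)
qed (use X N in \<open>auto simp: cmsk_def\<close>)

lemma sub_one:
  assumes U: "U \<subseteq> {0..<n}"
  shows "submatrix (1\<^sub>m n :: real mat) U U = 1\<^sub>m (card U)"
proof -
  have O: "(1\<^sub>m n :: real mat) \<in> carrier_mat n n" by auto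
  have s: "submatrix (1\<^sub>m n :: real mat) U U \<in> carrier_mat (card U) (card U)" by (rule sub_carrier[OF O U U])
  show ?thesis
  proof (rule eq_matI)
    fix a b assume "a < dim_row (1\<^sub>m (card U) :: real mat)" "b < dim_col (1\<^sub>m (card U) :: real mat)"
    hence a: "a < card U" and b: "b < card U" by auto
    have pa: "pick U a < n" using pick_in[OF a] U by auto
    have pb: "pick U b < n" using pick_in[OF b] U by auto
    have "(pick U a = pick U b) = (a = b)" using pos_pick[OF a] pos_pick[OF b] by metis
    thus "submatrix (1\<^sub>m n) U U $$ (a,b) = (1\<^sub>m (card U) :: real mat) $$ (a,b)"
      unfolding sub_entry[OF O U U a b] using pa pb a b by simp
  qed (use s in auto)
qed

lemma sub_add:
  fixes A B :: "real mat"
  assumes A: "A \<in> carrier_mat n n" and B: "B \<in> carrier_mat n n" and I: "I \<subseteq> {0..<n}" and J: "J \<subseteq> {0..<n}"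
  shows "submatrix (A + B) I J = submatrix A I J + submatrix B I J"
proof -
  have AB: "A + B \<in> carrier_mat n n" using A B by auto
  have s1: "submatrix A I J \<in> carrier_mat (card I) (card J)" by (rule sub_carrier[OF A I J])
  have s2: "submatrix B I J \<in> carrier_mat (card I) (card J)" by (rule sub_carrier[OF B I J])
  have s3: "submatrix (A+B) I J \<in> carrier_mat (card I) (card J)" by (rule sub_carrier[OF AB I J])
  show ?thesis
  proof (rule eq_matI)
    fix a b assume "a < dim_row (submatrix A I J + submatrix B I J)" "b < dim_col (submatrix A I J + submatrix B I J)"
    hence a: "a < card I" and b: "b < card J" using s2 by auto
    have pa: "pick I a < n" using pick_in[OF a] I by auto
    have pb: "pick J b < n" using pick_in[OF b] J by auto
    show "submatrix (A + B) I J $$ (a,b) = (submatrix A I J + submatrix B I J) $$ (a,b)"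
      using sub_entry[OF AB I J a b] sub_entry[OF A I J a b] sub_entry[OF B I J a b] s2 a b pa pb A B by simp
  qed (use s1 s2 s3 in auto)
qed

lemma sub_pow:
  fixes N :: "real mat"
  assumes N: "N \<in> carrier_mat n n" and U: "U \<subseteq> {0..<n}"
    and z: "\<forall>p<n. \<forall>q<n. p \<notin> U \<longrightarrow> N $$ (p,q) = 0"
  shows "(submatrix N U U) ^\<^sub>m k = submatrix (N ^\<^sub>m k) U U"
proof (induction k)
  case 0
  have dS: "dim_row (submatrix N U U) = card U" using sub_carrier[OF N U U] by auto
  have dN: "dim_row N = n" using N by auto
  have e: "submatrix (1\<^sub>m n) U U = (1\<^sub>m (card U) :: real mat)" by (rule sub_one[OF U])
  show ?case by (simp only: pow_mat.simps(1) geom_mat.simps(1) dS dN e)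
next
  case (Suc k)
  have Nk: "N ^\<^sub>m k \<in> carrier_mat n n" using N by auto
  have "(submatrix N U U) ^\<^sub>m Suc k = submatrix (N ^\<^sub>m k) U U * submatrix N U U" using Suc by simp
  also have "\<dots> = submatrix (cmsk U (N ^\<^sub>m k) * N) U U" by (rule sub_mult[OF Nk N U U U])
  also have "cmsk U (N ^\<^sub>m k) * N = N ^\<^sub>m k * N" by (rule cmsk_rowzero[OF Nk N z])
  finally show ?case by simp
qed

lemma sub_geom:
  fixes N :: "real mat"
  assumes N: "N \<in> carrier_mat n n" and U: "U \<subseteq> {0..<n}"
    and z: "\<forall>p<n. \<forall>q<n. p \<notin> U \<longrightarrow> N $$ (p,q) = 0"
  shows "geom_mat (submatrix N U U) l = submatrix (geom_mat N l) U U"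
proof (induction l)
  case 0
  have dS: "dim_row (submatrix N U U) = card U" using sub_carrier[OF N U U] by auto
  have dN: "dim_row N = n" using N by auto
  have e: "submatrix (1\<^sub>m n) U U = (1\<^sub>m (card U) :: real mat)" by (rule sub_one[OF U])
  show ?case by (simp only: pow_mat.simps(1) geom_mat.simps(1) dS dN e)
next
  case (Suc l)
  have G: "geom_mat N l \<in> carrier_mat n n" by (rule geom_carrier[OF N])
  have P: "N ^\<^sub>m Suc l \<in> carrier_mat n n" using N by auto
  show ?case
    unfolding geom_mat.simps Suc sub_pow[OF N U z] sub_add[OF G P U U] ..
qed

lemma repr:
  fixes l :: nat
  assumes M: "M \<in> carrier_mat n n" and i: "i < n" and j: "j < n"
  defines "U \<equiv> Gamma M l i j - {i,j}" and "c \<equiv> 1 / rho M"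
  shows "isoradial_l l i j M = submatrix M {i,j} {i,j} +
     c \<cdot>\<^sub>m submatrix (cmsk U (cmsk U M * geom_mat (c \<cdot>\<^sub>m msk U M) l) * M) {i,j} {i,j}"
proof -
  have U: "U \<subseteq> {0..<n}" unfolding U_def Gamma_def using M by auto
  have S: "{i,j} \<subseteq> {0..<n}" using i j by auto
  define N where "N = c \<cdot>\<^sub>m msk U M"
  have N: "N \<in> carrier_mat n n" unfolding N_def using msk_carrier[OF M] by auto
  have z: "\<forall>p<n. \<forall>q<n. p \<notin> U \<longrightarrow> N $$ (p,q) = 0" unfolding N_def msk_def using M by auto
  have cs: "c \<cdot>\<^sub>m submatrix M U U = submatrix N U U"
  proof -
    have s1: "submatrix M U U \<in> carrier_mat (card U) (card U)" by (rule sub_carrier[OF M U U])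
    have s2: "submatrix N U U \<in> carrier_mat (card U) (card U)" by (rule sub_carrier[OF N U U])
    show ?thesis
    proof (rule eq_matI)
      fix a b assume "a < dim_row (submatrix N U U)" "b < dim_col (submatrix N U U)"
      hence a: "a < card U" and b: "b < card U" using s2 by auto
      have pa: "pick U a \<in> U" "pick U a < n" using pick_in[OF a] U by auto
      have pb: "pick U b \<in> U" "pick U b < n" using pick_in[OF b] U by auto
      show "(c \<cdot>\<^sub>m submatrix M U U) $$ (a,b) = submatrix N U U $$ (a,b)"
        using sub_entry[OF N U U a b] sub_entry[OF M U U a b] s1 a b pa pb M
        unfolding N_def msk_def by simp
    qed (use s1 s2 in auto)
  qed
  define G where "G = geom_mat N l"
  have G: "G \<in> carrier_mat n n" unfolding G_def by (rule geom_carrier[OF N])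
  have CG: "cmsk U M * G \<in> carrier_mat n n" by (rule mult_carrier_mat[OF cmsk_carrier[OF M] G])
  have "isoradial_l l i j M = submatrix M {i,j} {i,j} +
     c \<cdot>\<^sub>m (submatrix M {i,j} U * geom_mat (c \<cdot>\<^sub>m submatrix M U U) l * submatrix M U {i,j})"
    unfolding isoradial_l_def Let_def U_def c_def ..
  also have "geom_mat (c \<cdot>\<^sub>m submatrix M U U) l = submatrix G U U"
    unfolding cs G_def by (rule sub_geom[OF N U z])
  also have "submatrix M {i,j} U * submatrix G U U = submatrix (cmsk U M * G) {i,j} U"
    by (rule sub_mult[OF M G S U U])
  also have "submatrix (cmsk U M * G) {i,j} U * submatrix M U {i,j} = submatrix (cmsk U (cmsk U M * G) * M) {i,j} {i,j}"
    by (rule sub_mult[OF CG M S S U])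
  finally show ?thesis unfolding G_def N_def .
qed




lemma mle_trans: "mle n A B \<Longrightarrow> mle n B C \<Longrightarrow> mle n A C"
  unfolding mle_def by (meson order_trans)

lemma mle_refl: "A \<in> carrier_mat n n \<Longrightarrow> nonneg_mat A \<Longrightarrow> mle n A A"
  unfolding mle_def nonneg_mat_def by auto

lemma mle_mult:
  assumes "mle n A A'" "mle n B B'"
  shows "mle n (A*B) (A'*B')"
proof -
  have A: "A \<in> carrier_mat n n" "A' \<in> carrier_mat n n" and B: "B \<in> carrier_mat n n" "B' \<in> carrier_mat n n"
    using assms unfolding mle_def by auto
  have hA: "\<And>p q. p < n \<Longrightarrow> q < n \<Longrightarrow> 0 \<le> A $$ (p,q) \<and> A $$ (p,q) \<le> A' $$ (p,q)"
    and hB: "\<And>p q. p < n \<Longrightarrow> q < n \<Longrightarrow> 0 \<le> B $$ (p,q) \<and> B $$ (p,q) \<le> B' $$ (p,q)"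
    using assms unfolding mle_def by auto
  show ?thesis unfolding mle_def
  proof (intro conjI allI impI)
    show "A * B \<in> carrier_mat n n" "A' * B' \<in> carrier_mat n n" using A B by auto
    fix p q assume p: "p < n" and q: "q < n"
    show "0 \<le> (A*B) $$ (p,q)" unfolding mult_entry[OF A(1) B(1) p q]
      by (rule sum_nonneg) (use hA hB p q in auto)
    show "(A*B) $$ (p,q) \<le> (A'*B') $$ (p,q)" unfolding mult_entry[OF A(1) B(1) p q] mult_entry[OF A(2) B(2) p q]
    proof (rule sum_mono)
      fix t assume "t \<in> {..<n}"
      hence t: "t < n" by auto
      show "A $$ (p,t) * B $$ (t,q) \<le> A' $$ (p,t) * B' $$ (t,q)"
        using hA[OF p t] hB[OF t q] by (intro mult_mono) auto
    qed
  qed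
qed

lemma mle_add:
  assumes "mle n A A'" "mle n B B'"
  shows "mle n (A+B) (A'+B')"
  using assms unfolding mle_def by (auto intro!: add_mono add_nonneg_nonneg)

lemma mle_nonneg2: "mle n A A' \<Longrightarrow> p < n \<Longrightarrow> q < n \<Longrightarrow> 0 \<le> A' $$ (p,q)"
  unfolding mle_def by (meson order_trans)

lemma mle_smult: assumes c: "0 \<le> c" and m: "mle n A A'" shows "mle n (c \<cdot>\<^sub>m A) (c \<cdot>\<^sub>m A')"
proof -
  have A: "A \<in> carrier_mat n n" "A' \<in> carrier_mat n n" using m unfolding mle_def by auto
  have h: "\<And>p q. p < n \<Longrightarrow> q < n \<Longrightarrow> 0 \<le> A $$ (p,q) \<and> A $$ (p,q) \<le> A' $$ (p,q)"
    using m unfolding mle_def by auto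
  show ?thesis unfolding mle_def
  proof (intro conjI allI impI)
    show "c \<cdot>\<^sub>m A \<in> carrier_mat n n" "c \<cdot>\<^sub>m A' \<in> carrier_mat n n" using A by auto
    fix p q assume p: "p < n" and q: "q < n"
    show "0 \<le> (c \<cdot>\<^sub>m A) $$ (p,q)" using h[OF p q] c A p q by simp
    show "(c \<cdot>\<^sub>m A) $$ (p,q) \<le> (c \<cdot>\<^sub>m A') $$ (p,q)" using h[OF p q] c A p q by (simp add: mult_left_mono)
  qed
qed

lemma mle_one: "mle n (1\<^sub>m n) (1\<^sub>m n)"
  unfolding mle_def by auto

lemma mle_pow: assumes "mle n A A'" shows "mle n (A ^\<^sub>m k) (A' ^\<^sub>m k)"
proof (induction k)
  case 0
  have "dim_row A = n" "dim_row A' = n" using assms unfolding mle_def by auto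
  then show ?case using mle_one by simp
next
  case (Suc k) then show ?case using mle_mult[OF Suc assms] by simp
qed

lemma mle_geom: assumes "mle n A A'" shows "mle n (geom_mat A l) (geom_mat A' l)"
proof (induction l)
  case 0
  have "dim_row A = n" "dim_row A' = n" using assms unfolding mle_def by auto
  then show ?case using mle_one by simp
next
  case (Suc l) show ?case unfolding geom_mat.simps by (rule mle_add[OF Suc mle_pow[OF assms]])
qed

lemma mle_geom_Suc: assumes A: "mle n A A" shows "mle n (geom_mat A l) (geom_mat A (Suc l))"
proof -
  have G: "mle n (geom_mat A l) (geom_mat A l)" by (rule mle_geom[OF A])
  have P: "mle n (A ^\<^sub>m Suc l) (A ^\<^sub>m Suc l)" by (rule mle_pow[OF A])
  have Ac: "A \<in> carrier_mat n n" using A unfolding mle_def by auto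
  have Gc: "geom_mat A l \<in> carrier_mat n n" and Pc: "A ^\<^sub>m Suc l \<in> carrier_mat n n" using G P unfolding mle_def by auto
  show ?thesis unfolding mle_def
  proof (intro conjI allI impI)
    show "geom_mat A l \<in> carrier_mat n n" by (rule Gc)
    show "geom_mat A (Suc l) \<in> carrier_mat n n" using Gc Pc by simp
    fix p q assume p: "p < n" and q: "q < n"
    show "0 \<le> geom_mat A l $$ (p,q)" using G p q unfolding mle_def by auto
    have e: "geom_mat A (Suc l) $$ (p,q) = geom_mat A l $$ (p,q) + (A ^\<^sub>m Suc l) $$ (p,q)"
      unfolding geom_mat.simps using index_add_mat(1)[of p "A ^\<^sub>m Suc l" q "geom_mat A l"] Pc p q Ac by simp
    have "0 \<le> (A ^\<^sub>m Suc l) $$ (p,q)" using P p q unfolding mle_def by blast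
    thus "geom_mat A l $$ (p,q) \<le> geom_mat A (Suc l) $$ (p,q)" unfolding e by simp
  qed
qed

lemma mle_msk:
  assumes M: "M \<in> carrier_mat n n" and nn: "nonneg_mat M" and U: "U \<subseteq> U'"
  shows "mle n (msk U M) (msk U' M)"
  using assms unfolding mle_def msk_def nonneg_mat_def by auto

lemma mle_cmsk:
  assumes "mle n A A'" and U: "U \<subseteq> U'"
  shows "mle n (cmsk U A) (cmsk U' A')"
  using assms mle_nonneg2[OF assms(1)] unfolding mle_def cmsk_def by auto

lemma iso_mono:
  assumes M: "M \<in> carrier_mat n n" and nn: "nonneg_mat M"
    and i: "i < n" and j: "j < n" and ij: "i \<noteq> j" and a: "a < 2" and b: "b < 2"
  shows "isoradial_l l i j M $$ (a,b) \<le> isoradial_l (Suc l) i j M $$ (a,b)"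
proof -
  define U1 where "U1 = Gamma M l i j - {i,j}"
  define U2 where "U2 = Gamma M (Suc l) i j - {i,j}"
  have U12: "U1 \<subseteq> U2" unfolding U1_def U2_def Gamma_def by auto
  define c where "c = 1 / rho M"
  have n0: "n > 0" using i by auto
  have c0: "c \<ge> 0" unfolding c_def rho_def using sr_nonneg[of _ n] M n0 by auto
  define W where "W U k = cmsk U (cmsk U M * geom_mat (c \<cdot>\<^sub>m msk U M) k) * M" for U k
  have mM: "mle n M M" by (rule mle_refl[OF M nn])
  have m1: "mle n (c \<cdot>\<^sub>m msk U1 M) (c \<cdot>\<^sub>m msk U2 M)" by (rule mle_smult[OF c0 mle_msk[OF M nn U12]])
  have m2: "mle n (c \<cdot>\<^sub>m msk U2 M) (c \<cdot>\<^sub>m msk U2 M)" by (rule mle_smult[OF c0 mle_msk[OF M nn order_refl]])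
  have mg: "mle n (geom_mat (c \<cdot>\<^sub>m msk U1 M) l) (geom_mat (c \<cdot>\<^sub>m msk U2 M) (Suc l))"
    by (rule mle_trans[OF mle_geom[OF m1] mle_geom_Suc[OF m2]])
  have mW: "mle n (W U1 l) (W U2 (Suc l))"
    unfolding W_def by (intro mle_mult mle_cmsk mg mM U12)
  define S where "S = {i,j}"
  have S: "S \<subseteq> {0..<n}" unfolding S_def using i j by auto
  have cS: "card S = 2" unfolding S_def using ij by auto
  have a': "a < card S" and b': "b < card S" using a b cS by auto
  have pa: "pick S a < n" and pb: "pick S b < n" using pick_in[OF a'] pick_in[OF b'] S by auto
  have val: "isoradial_l k i j M $$ (a,b) = M $$ (pick S a, pick S b) + c * W (Gamma M k i j - {i,j}) k $$ (pick S a, pick S b)" for k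
  proof -
    define U where "U = Gamma M k i j - {i,j}"
    have U: "U \<subseteq> {0..<n}" unfolding U_def Gamma_def using M by auto
    have g: "geom_mat (c \<cdot>\<^sub>m msk U M) k \<in> carrier_mat n n"
      by (rule geom_carrier) (use msk_carrier[OF M] in auto)
    have g2: "cmsk U M * geom_mat (c \<cdot>\<^sub>m msk U M) k \<in> carrier_mat n n"
      by (rule mult_carrier_mat[OF cmsk_carrier[OF M] g])
    have Wc: "W U k \<in> carrier_mat n n" unfolding W_def
      by (rule mult_carrier_mat[OF cmsk_carrier[OF g2] M])
    have s1: "submatrix (W U k) S S \<in> carrier_mat 2 2" using sub_carrier[OF Wc S S] cS by simp
    have "isoradial_l k i j M = submatrix M S S + c \<cdot>\<^sub>m submatrix (W U k) S S"
      unfolding S_def U_def W_def c_def by (rule repr[OF M i j])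
    thus ?thesis using s1 a b sub_entry[OF Wc S S a' b'] sub_entry[OF M S S a' b'] unfolding U_def by simp
  qed
  have "W U1 l $$ (pick S a, pick S b) \<le> W U2 (Suc l) $$ (pick S a, pick S b)"
    using mW pa pb unfolding mle_def by auto
  hence "c * W U1 l $$ (pick S a, pick S b) \<le> c * W U2 (Suc l) $$ (pick S a, pick S b)"
    using c0 by (rule mult_left_mono)
  thus ?thesis unfolding val U1_def U2_def by simp
qed




theorem theorem2:
  fixes M :: "real mat" and n :: nat
  assumes "n \<ge> 3" and "M \<in> carrier_mat n n"
    and "nonneg_mat M" and "irreducible_mat M"
  shows "(\<forall>i<n. \<forall>j<n. (\<lambda>l. eff_l l M $$ (i,j)) \<longlonglongrightarrow> eff M $$ (i,j))
       \<and> (\<forall>l\<ge>1. \<forall>i<n. \<forall>j<n. eff_l l M $$ (i,j) \<le> eff_l (Suc l) M $$ (i,j))"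
proof -
  note n3 = assms(1) and M = assms(2) and nn = assms(3) and irr = assms(4)
  have dr: "dim_row M = n" using M by auto
  have effl: "eff_l l M $$ (i,j) = (if i \<noteq> j then entry (isoradial_l l i j M) {i,j} i j
     else (\<Sum>k\<in>{0..<n} - {i}. entry (isoradial_l l i k M) {i,k} i i))" if "i < n" "j < n" for l i j
    unfolding eff_l_def dr using that by simp
  have eff: "eff M $$ (i,j) = (if i \<noteq> j then entry (isoradial {i,j} M) {i,j} i j
     else (\<Sum>k\<in>{0..<n} - {i}. entry (isoradial {i,k} M) {i,k} i i))" if "i < n" "j < n" for i j
    unfolding eff_def dr using that by simp
  have pos2: "pos {i,k} i < 2" "pos {i,k} k < 2" if "i \<noteq> k" for i k
  proof -
    have c: "card {i,k} = 2" using that by auto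
    show "pos {i,k} i < 2" using pos_less[of "{i,k}" i] c by auto
    show "pos {i,k} k < 2" using pos_less[of "{i,k}" k] c by auto
  qed
  have lim: "(\<lambda>l. entry (isoradial_l l i j M) {i,j} a b) \<longlonglongrightarrow> entry (isoradial {i,j} M) {i,j} a b"
    if "i < n" "j < n" "i \<noteq> j" "a \<in> {i,j}" "b \<in> {i,j}" for i j a b
  proof -
    have "pos {i,j} a < 2" "pos {i,j} b < 2" using pos2[OF that(3)] that(4,5) by auto
    thus ?thesis unfolding entry_def by (rule iso_lim[OF M nn irr n3 that(1-3)])
  qed
  have mono: "entry (isoradial_l l i j M) {i,j} a b \<le> entry (isoradial_l (Suc l) i j M) {i,j} a b"
    if "i < n" "j < n" "i \<noteq> j" "a \<in> {i,j}" "b \<in> {i,j}" for l i j a b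
  proof -
    have "pos {i,j} a < 2" "pos {i,j} b < 2" using pos2[OF that(3)] that(4,5) by auto
    thus ?thesis unfolding entry_def by (rule iso_mono[OF M nn that(1-3)])
  qed
  show ?thesis
  proof (intro conjI allI impI)
    fix i j assume i: "i < n" and j: "j < n"
    show "(\<lambda>l. eff_l l M $$ (i,j)) \<longlonglongrightarrow> eff M $$ (i,j)"
    proof (cases "i = j")
      case False
      then show ?thesis unfolding effl[OF i j] eff[OF i j] using lim[OF i j False] by simp
    next
      case True
      have "(\<lambda>l. \<Sum>k\<in>{0..<n} - {i}. entry (isoradial_l l i k M) {i,k} i i)
          \<longlonglongrightarrow> (\<Sum>k\<in>{0..<n} - {i}. entry (isoradial {i,k} M) {i,k} i i)"
        by (rule tendsto_sum) (use lim i in auto)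
      then show ?thesis unfolding effl[OF i j] eff[OF i j] using True by simp
    qed
  next
    fix l :: nat and i j assume l: "1 \<le> l" and i: "i < n" and j: "j < n"
    show "eff_l l M $$ (i,j) \<le> eff_l (Suc l) M $$ (i,j)"
    proof (cases "i = j")
      case False
      then show ?thesis unfolding effl[OF i j] using mono[OF i j False] by simp
    next
      case True
      have "(\<Sum>k\<in>{0..<n} - {i}. entry (isoradial_l l i k M) {i,k} i i)
          \<le> (\<Sum>k\<in>{0..<n} - {i}. entry (isoradial_l (Suc l) i k M) {i,k} i i)"
        by (rule sum_mono) (use mono i in auto)
      then show ?thesis unfolding effl[OF i j] using True by simp
    qed
  qed
qed


end
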